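(* Let $(X,d,\mu)$ be a space of homogeneous type, let $\mathcal{D}$ be a dyadic grid on $X$, let $p(\cdot)\in\mathrm{LH}$ and let $w\in A_{p(\cdot)}$. Then there exists a constant $K$ such that for every $Q\in\mathcal{D}$, \[ \|w\chi_Q\|_{p(\cdot)}\|w^{-1}\chi_Q\|_{p'(\cdot)}\le K\mu(Q). \]
   Context: A space of homogeneous type $(X,d,\mu)$: $X$ nonempty, $d$ a quasi-metric ($d(x,y)=0$ iff $x=y$, symmetric, $d(x,y)\le A_0(d(x,z)+d(z,y))$ for some $A_0\ge1$), $\mu$ a regular measure on the $\sigma$-algebra generated by balls $B(x,r)=\{y:d(x,y)<r\}$ and open sets, with $0<\mu(B(x,2r))\le C_\mu\mu(B(x,r))<\infty$. A dyadic grid on $X$ is a family $\mathcal{D}=\bigcup_{k\in\mathbb{Z}}\mathcal{D}_k$ of subsets of $X$ (cubes), with points $\{x_c(Q)\}_{Q\in\mathcal D}$ and constants $C_d>0$, $d_0>1$, $0<\epsilon<1$, such that: (1) for each $k$ the cubes of $\mathcal D_k$ are pairwise disjoint and cover $X$; (2) any two cubes are either disjoint or one contains the other; (3) each $Q_1\in\mathcal D_k$ contains at least one $Q_2\in\mathcal D_{k-1}$ (a child) and is contained in exactly one $Q_3\in\mathcal D_{k+1}$ (its parent); (4) if $Q_2$ is a child of $Q_1$ then $\mu(Q_2)\ge\epsilon\mu(Q_1)$; (5) for $Q\in\mathcal D_k$, $B(x_c(Q),d_0^k)\subseteq Q\subseteq B(x_c(Q),C_dd_0^k)$. An exponent is a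 measurable $p:X\to[1,\infty]$. With $X_\infty=\{p=\infty\}$, $\rho_{p(\cdot)}(f)=\int_{X\setminus X_\infty}|f(x)|^{p(x)}d\mu+\|f\|_{L^\infty(X_\infty)}$ and $\|f\|_{p(\cdot)}=\inf\{\lambda>0:\rho_{p(\cdot)}(f/\lambda)\le1\}$; $p'(x)=p(x)/(p(x)-1)$ (with $1/0=\infty$, $1/\infty=0$). $p(\cdot)\in\mathrm{LH}_0$ if there is $C_0$ with $|p(x)-p(y)|<-C_0/\log d(x,y)$ whenever $d(x,y)<1/2$; $p(\cdot)\in\mathrm{LH}_\infty$ if there are constants $C_\infty,p_\infty$ with $|p(x)-p_\infty|<C_\infty/\log(e+d(x,x_0))$ for all $x$, for a fixed base point $x_0$; $\mathrm{LH}=\mathrm{LH}_0\cap\mathrm{LH}_\infty$. A weight is a locally integrable $w:X\to[0,\infty]$ with $0<w<\infty$ a.e.; $w\in A_{p(\cdot)}$ means there is $K_0$ with $\|w\chi_B\|_{p(\cdot)}\|w^{-1}\chi_B\|_{p'(\cdot)}\le K_0\mu(B)$ for every ball $B$. *)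

theory Defs
  imports "HOL-Analysis.Analysis"
begin

definition qball :: "('a \<Rightarrow> 'a \<Rightarrow> real) \<Rightarrow> 'a set \<Rightarrow> 'a \<Rightarrow> real \<Rightarrow> 'a set" where
  "qball d X x r = {y \<in> X. d x y < r}"

definition quasi_metric :: "'a set \<Rightarrow> ('a \<Rightarrow> 'a \<Rightarrow> real) \<Rightarrow> real \<Rightarrow> bool" where
  "quasi_metric X d A0 \<longleftrightarrow> A0 \<ge> 1 \<and>
     (\<forall>x\<in>X. \<forall>y\<in>X. d x y \<ge> 0 \<and> (d x y = 0 \<longleftrightarrow> x = y) \<and> d x y = d y x) \<and>
     (\<forall>x\<in>X. \<forall>y\<in>X. \<forall>z\<in>X. d x y \<le> A0 * (d x z + d z y))"

definition qopen :: "('a \<Rightarrow> 'a \<Rightarrow> real) \<Rightarrow> 'a set \<Rightarrow> 'a set \<Rightarrow> bool" where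
  "qopen d X U \<longleftrightarrow> U \<subseteq> X \<and> (\<forall>x\<in>U. \<exists>r>0. qball d X x r \<subseteq> U)"

definition outer_regular :: "('a \<Rightarrow> 'a \<Rightarrow> real) \<Rightarrow> 'a measure \<Rightarrow> bool" where
  "outer_regular d M \<longleftrightarrow> (\<forall>E\<in>sets M.
     emeasure M E = (INF U\<in>{U. U \<in> sets M \<and> qopen d (space M) U \<and> E \<subseteq> U}. emeasure M U))"

definition homogeneous_space :: "('a \<Rightarrow> 'a \<Rightarrow> real) \<Rightarrow> 'a measure \<Rightarrow> bool" where
  "homogeneous_space d M \<longleftrightarrow> space M \<noteq> {} \<and>
     (\<exists>A0. quasi_metric (space M) d A0) \<and>
     sets M = sigma_sets (space M)
        ({qball d (space M) x r | x r. x \<in> space M} \<union> {U. qopen d (space M) U}) \<and>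
     outer_regular d M \<and>
     (\<exists>C\<mu>. \<forall>x\<in>space M. \<forall>r>0.
        0 < emeasure M (qball d (space M) x (2*r)) \<and>
        emeasure M (qball d (space M) x (2*r)) \<le> ennreal C\<mu> * emeasure M (qball d (space M) x r) \<and>
        emeasure M (qball d (space M) x r) < \<infinity>)"

definition dyadic_grid :: "('a \<Rightarrow> 'a \<Rightarrow> real) \<Rightarrow> 'a measure \<Rightarrow> (int \<Rightarrow> 'a set set) \<Rightarrow> ('a set \<Rightarrow> 'a) \<Rightarrow> bool" where
  "dyadic_grid d M D xc \<longleftrightarrow> (\<exists>Cd d0 \<epsilon>. Cd > 0 \<and> d0 > 1 \<and> 0 < \<epsilon> \<and> \<epsilon> < 1 \<and>
     (\<forall>k. D k \<subseteq> sets M) \<and>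
     (\<forall>k. pairwise disjnt (D k) \<and> \<Union>(D k) = space M) \<and>
     (\<forall>Q1\<in>(\<Union>k. D k). \<forall>Q2\<in>(\<Union>k. D k). Q1 \<inter> Q2 = {} \<or> Q1 \<subseteq> Q2 \<or> Q2 \<subseteq> Q1) \<and>
     (\<forall>k. \<forall>Q1\<in>D k. (\<exists>Q2\<in>D (k - 1). Q2 \<subseteq> Q1) \<and> (\<exists>!Q3. Q3 \<in> D (k + 1) \<and> Q1 \<subseteq> Q3)) \<and>
     (\<forall>k. \<forall>Q1\<in>D k. \<forall>Q2\<in>D (k - 1). Q2 \<subseteq> Q1 \<longrightarrow>
          emeasure M Q2 \<ge> ennreal \<epsilon> * emeasure M Q1) \<and>
     (\<forall>k. \<forall>Q\<in>D k. xc Q \<in> space M \<and>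
          qball d (space M) (xc Q) (d0 powr real_of_int k) \<subseteq> Q \<and>
          Q \<subseteq> qball d (space M) (xc Q) (Cd * d0 powr real_of_int k)))"

definition exponent :: "'a measure \<Rightarrow> ('a \<Rightarrow> ereal) \<Rightarrow> bool" where
  "exponent M p \<longleftrightarrow> p \<in> borel_measurable M \<and> (\<forall>x\<in>space M. 1 \<le> p x)"

definition Xinf :: "'a measure \<Rightarrow> ('a \<Rightarrow> ereal) \<Rightarrow> 'a set" where
  "Xinf M p = {x \<in> space M. p x = \<infinity>}"

definition Linf_norm_on :: "'a measure \<Rightarrow> 'a set \<Rightarrow> ('a \<Rightarrow> real) \<Rightarrow> ennreal" where
  "Linf_norm_on M A f = (INF c\<in>{c::ennreal. AE x in M. x \<in> A \<longrightarrow> ennreal \<bar>f x\<bar> \<le> c}. c)"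

definition modular :: "'a measure \<Rightarrow> ('a \<Rightarrow> ereal) \<Rightarrow> ('a \<Rightarrow> real) \<Rightarrow> ennreal" where
  "modular M p f =
     (\<integral>\<^sup>+ x. ennreal (\<bar>f x\<bar> powr real_of_ereal (p x)) * indicator (space M - Xinf M p) x \<partial>M)
     + Linf_norm_on M (Xinf M p) f"

definition var_norm :: "'a measure \<Rightarrow> ('a \<Rightarrow> ereal) \<Rightarrow> ('a \<Rightarrow> real) \<Rightarrow> ennreal" where
  "var_norm M p f = (INF t\<in>{t::real. t > 0 \<and> modular M p (\<lambda>x. f x / t) \<le> 1}. ennreal t)"

definition conj_exp :: "('a \<Rightarrow> ereal) \<Rightarrow> 'a \<Rightarrow> ereal" where
  "conj_exp p x = (if p x = 1 then \<infinity> else if p x = \<infinity> then 1 else p x / (p x - 1))"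

definition LH0 :: "('a \<Rightarrow> 'a \<Rightarrow> real) \<Rightarrow> 'a set \<Rightarrow> ('a \<Rightarrow> ereal) \<Rightarrow> bool" where
  "LH0 d X p \<longleftrightarrow> (\<exists>C0. \<forall>x\<in>X. \<forall>y\<in>X. 0 < d x y \<and> d x y < 1/2 \<longrightarrow>
       \<bar>p x - p y\<bar> < ereal (- C0 / ln (d x y)))"

definition LHinf :: "('a \<Rightarrow> 'a \<Rightarrow> real) \<Rightarrow> 'a set \<Rightarrow> 'a \<Rightarrow> ('a \<Rightarrow> ereal) \<Rightarrow> bool" where
  "LHinf d X x0 p \<longleftrightarrow> (\<exists>Cinf pinf::real. \<forall>x\<in>X.
       \<bar>p x - ereal pinf\<bar> < ereal (Cinf / ln (exp 1 + d x x0)))"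

definition LH :: "('a \<Rightarrow> 'a \<Rightarrow> real) \<Rightarrow> 'a set \<Rightarrow> 'a \<Rightarrow> ('a \<Rightarrow> ereal) \<Rightarrow> bool" where
  "LH d X x0 p \<longleftrightarrow> LH0 d X p \<and> LHinf d X x0 p"

definition weight :: "('a \<Rightarrow> 'a \<Rightarrow> real) \<Rightarrow> 'a measure \<Rightarrow> ('a \<Rightarrow> real) \<Rightarrow> bool" where
  "weight d M w \<longleftrightarrow> w \<in> borel_measurable M \<and> (\<forall>x\<in>space M. 0 \<le> w x) \<and>
     (\<forall>x\<in>space M. \<forall>r. set_integrable M (qball d (space M) x r) w) \<and>
     (AE x in M. 0 < w x)"

definition A_var :: "('a \<Rightarrow> 'a \<Rightarrow> real) \<Rightarrow> 'a measure \<Rightarrow> ('a \<Rightarrow> ereal) \<Rightarrow> ('a \<Rightarrow> real) \<Rightarrow> bool" where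
  "A_var d M p w \<longleftrightarrow> weight d M w \<and>
     (\<exists>K0::real. \<forall>x\<in>space M. \<forall>r.
        var_norm M p (\<lambda>y. w y * indicator (qball d (space M) x r) y)
        * var_norm M (conj_exp p) (\<lambda>y. inverse (w y) * indicator (qball d (space M) x r) y)
        \<le> ennreal K0 * emeasure M (qball d (space M) x r))"

end

theory Submission
  imports Defs
begin

lemma modular_mono:
  assumes "\<And>x. \<bar>f x\<bar> \<le> \<bar>g x\<bar>" and "\<forall>x\<in>space M. 1 \<le> p x"
  shows "modular M p f \<le> modular M p g"
proof -
  have "(\<integral>\<^sup>+ x. ennreal (\<bar>f x\<bar> powr real_of_ereal (p x)) * indicator (space M - Xinf M p) x \<partial>M)
     \<le> (\<integral>\<^sup>+ x. ennreal (\<bar>g x\<bar> powr real_of_ereal (p x)) * indicator (space M - Xinf M p) x \<partial>M)"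
  proof (rule nn_integral_mono)
    fix x assume "x \<in> space M"
    show "ennreal (\<bar>f x\<bar> powr real_of_ereal (p x)) * indicator (space M - Xinf M p) x
      \<le> ennreal (\<bar>g x\<bar> powr real_of_ereal (p x)) * indicator (space M - Xinf M p) x"
    proof (cases "x \<in> space M - Xinf M p")
      case True
      then have "1 \<le> p x" using assms(2) by auto
      then have "0 \<le> real_of_ereal (p x)"
        by (cases "p x") auto
      then have "\<bar>f x\<bar> powr real_of_ereal (p x) \<le> \<bar>g x\<bar> powr real_of_ereal (p x)"
        using assms(1) by (simp add: powr_mono2)
      then show ?thesis using True by (simp add: ennreal_leI)
    qed simp
  qed
  moreover have "Linf_norm_on M (Xinf M p) f \<le> Linf_norm_on M (Xinf M p) g"
    unfolding Linf_norm_on_def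
  proof (rule INF_superset_mono)
    show "{c. AE x in M. x \<in> Xinf M p \<longrightarrow> ennreal \<bar>g x\<bar> \<le> c}
      \<subseteq> {c. AE x in M. x \<in> Xinf M p \<longrightarrow> ennreal \<bar>f x\<bar> \<le> c}"
    proof
      fix c assume "c \<in> {c. AE x in M. x \<in> Xinf M p \<longrightarrow> ennreal \<bar>g x\<bar> \<le> c}"
      then have "AE x in M. x \<in> Xinf M p \<longrightarrow> ennreal \<bar>g x\<bar> \<le> c" by simp
      then have "AE x in M. x \<in> Xinf M p \<longrightarrow> ennreal \<bar>f x\<bar> \<le> c"
        by eventually_elim (meson assms(1) ennreal_leI order_trans)
      then show "c \<in> {c. AE x in M. x \<in> Xinf M p \<longrightarrow> ennreal \<bar>f x\<bar> \<le> c}" by simp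
    qed
  qed simp
  ultimately show ?thesis unfolding modular_def by (rule add_mono)
qed

lemma var_norm_mono:
  assumes "\<And>x. \<bar>f x\<bar> \<le> \<bar>g x\<bar>" and "\<forall>x\<in>space M. 1 \<le> p x"
  shows "var_norm M p f \<le> var_norm M p g"
  unfolding var_norm_def
proof (rule INF_superset_mono)
  show "{t. 0 < t \<and> modular M p (\<lambda>x. g x / t) \<le> 1} \<subseteq> {t. 0 < t \<and> modular M p (\<lambda>x. f x / t) \<le> 1}"
  proof
    fix t assume t: "t \<in> {t. 0 < t \<and> modular M p (\<lambda>x. g x / t) \<le> 1}"
    then have "t > 0" by simp
    have "modular M p (\<lambda>x. f x / t) \<le> modular M p (\<lambda>x. g x / t)"
      apply (rule modular_mono[OF _ assms(2)])
      using \<open>t > 0\<close> assms(1) by (simp add: divide_right_mono)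
    then show "t \<in> {t. 0 < t \<and> modular M p (\<lambda>x. f x / t) \<le> 1}" using t by auto
  qed
qed simp

lemma qball_mono: "r \<le> s \<Longrightarrow> qball d X x r \<subseteq> qball d X x s"
  unfolding qball_def by auto

lemma conj_exp_ge1:
  assumes "\<forall>x\<in>space M. 1 \<le> p x" shows "\<forall>x\<in>space M. 1 \<le> conj_exp p x"
proof
  fix x assume "x \<in> space M"
  then have h: "1 \<le> p x" using assms by auto
  show "1 \<le> conj_exp p x"
  proof (cases "p x")
    case (real r)
    show ?thesis
    proof (cases "r = 1")
      case False
      then have "r > 1" using h real by auto
      then have "1 \<le> r / (r - 1)" by (simp add: field_simps)
      moreover have "ereal r - 1 = ereal (r - 1)" by (metis ereal_minus(1) one_ereal_def)
      moreover have "r - 1 \<noteq> 0" using False by simp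
      ultimately show ?thesis using real False unfolding conj_exp_def by simp
    qed (simp add: conj_exp_def real)
  qed (use h in \<open>auto simp: conj_exp_def\<close>)
qed

theorem lemma4p2:
  fixes d :: "'a \<Rightarrow> 'a \<Rightarrow> real" and M :: "'a measure"
    and D :: "int \<Rightarrow> 'a set set" and xc :: "'a set \<Rightarrow> 'a"
    and p :: "'a \<Rightarrow> ereal" and w :: "'a \<Rightarrow> real" and x0 :: 'a
  assumes "homogeneous_space d M"
    and "dyadic_grid d M D xc"
    and "exponent M p"
    and "x0 \<in> space M"
    and "LH d (space M) x0 p"
    and "A_var d M p w"
  shows "\<exists>K::real. \<forall>k. \<forall>Q\<in>D k.
           var_norm M p (\<lambda>y. w y * indicator Q y)
           * var_norm M (conj_exp p) (\<lambda>y. inverse (w y) * indicator Q y)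
           \<le> ennreal K * emeasure M Q"
proof -
  have p1: "\<forall>x\<in>space M. 1 \<le> p x" using assms(3) unfolding exponent_def by auto
  have p2: "\<forall>x\<in>space M. 1 \<le> conj_exp p x" using conj_exp_ge1[OF p1] .
  obtain K0 where K0: "\<forall>x\<in>space M. \<forall>r.
        var_norm M p (\<lambda>y. w y * indicator (qball d (space M) x r) y)
        * var_norm M (conj_exp p) (\<lambda>y. inverse (w y) * indicator (qball d (space M) x r) y)
        \<le> ennreal K0 * emeasure M (qball d (space M) x r)"
    using assms(6) unfolding A_var_def by blast
  obtain C\<mu> where Cmu: "\<forall>x\<in>space M. \<forall>r>0.
        emeasure M (qball d (space M) x (2*r)) \<le> ennreal C\<mu> * emeasure M (qball d (space M) x r)"
    using assms(1) unfolding homogeneous_space_def by blast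
  have sets: "sets M = sigma_sets (space M)
        ({qball d (space M) x r | x r. x \<in> space M} \<union> {U. qopen d (space M) U})"
    using assms(1) unfolding homogeneous_space_def by blast
  have qb_sets: "qball d (space M) x r \<in> sets M" if "x \<in> space M" for x r
    unfolding sets using that by (intro sigma_sets.Basic) blast
  define C where "C = max 1 C\<mu>"
  have C1: "C \<ge> 1" unfolding C_def by simp
  have Cd: "emeasure M (qball d (space M) x (2*r)) \<le> ennreal C * emeasure M (qball d (space M) x r)"
    if "x \<in> space M" "r > 0" for x r
  proof -
    have "ennreal C\<mu> \<le> ennreal C" unfolding C_def by (simp add: ennreal_leI)
    then show ?thesis using Cmu that by (meson mult_right_mono order_trans zero_le)
  qed
  have iter: "emeasure M (qball d (space M) x (2^n*r)) \<le> ennreal (C^n) * emeasure M (qball d (space M) x r)"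
    if "x \<in> space M" "r > 0" for x r n
  proof (induction n)
    case 0 then show ?case by simp
  next
    case (Suc n)
    have "emeasure M (qball d (space M) x (2^Suc n*r)) = emeasure M (qball d (space M) x (2*(2^n*r)))"
      by (simp add: mult.assoc)
    also have "\<dots> \<le> ennreal C * emeasure M (qball d (space M) x (2^n*r))"
      using Cd that by simp
    also have "\<dots> \<le> ennreal C * (ennreal (C^n) * emeasure M (qball d (space M) x r))"
      using Suc by (simp add: mult_left_mono)
    also have "\<dots> = ennreal (C^Suc n) * emeasure M (qball d (space M) x r)"
      using C1 by (simp add: ennreal_mult mult.assoc)
    finally show ?case .
  qed
  obtain Cdd d0 where g: "Cdd > 0" "d0 > 1" "\<forall>k. D k \<subseteq> sets M"
     "\<forall>k. \<forall>Q\<in>D k. xc Q \<in> space M \<and>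
          qball d (space M) (xc Q) (d0 powr real_of_int k) \<subseteq> Q \<and>
          Q \<subseteq> qball d (space M) (xc Q) (Cdd * d0 powr real_of_int k)"
    using assms(2) unfolding dyadic_grid_def apply (elim exE conjE)
    subgoal for Cdd d0 eps by (rule that[of Cdd d0]) simp_all
    done
  obtain N :: nat where N: "Cdd < 2^N" using real_arch_pow[of 2 Cdd] by auto
  show ?thesis
  proof (intro exI allI ballI)
    fix k Q assume Q: "Q \<in> D k"
    define x where "x = xc Q"
    define r where "r = d0 powr real_of_int k"
    have r: "r > 0" unfolding r_def using g(2) by simp
    have x: "x \<in> space M" and B0: "qball d (space M) x r \<subseteq> Q"
      and B: "Q \<subseteq> qball d (space M) x (Cdd * r)" using g(4) Q unfolding x_def r_def by auto
    have QM: "Q \<in> sets M" using g(3) Q by auto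
    have B2: "qball d (space M) x (Cdd * r) \<subseteq> qball d (space M) x (2^N * r)"
      using N r by (intro qball_mono) simp
    let ?B = "qball d (space M) x (Cdd * r)"
    have "var_norm M p (\<lambda>y. w y * indicator Q y)
           * var_norm M (conj_exp p) (\<lambda>y. inverse (w y) * indicator Q y)
       \<le> var_norm M p (\<lambda>y. w y * indicator ?B y)
           * var_norm M (conj_exp p) (\<lambda>y. inverse (w y) * indicator ?B y)"
    proof (rule mult_mono)
      show "var_norm M p (\<lambda>y. w y * indicator Q y) \<le> var_norm M p (\<lambda>y. w y * indicator ?B y)"
        using B by (intro var_norm_mono[OF _ p1]) (auto simp: indicator_def abs_mult)
      show "var_norm M (conj_exp p) (\<lambda>y. inverse (w y) * indicator Q y)
          \<le> var_norm M (conj_exp p) (\<lambda>y. inverse (w y) * indicator ?B y)"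
        using B by (intro var_norm_mono[OF _ p2]) (auto simp: indicator_def abs_mult)
    qed auto
    also have "\<dots> \<le> ennreal K0 * emeasure M ?B" using K0 x by blast
    also have "\<dots> \<le> ennreal K0 * emeasure M (qball d (space M) x (2^N * r))"
      using B2 qb_sets[OF x] by (intro mult_left_mono emeasure_mono) auto
    also have "\<dots> \<le> ennreal K0 * (ennreal (C^N) * emeasure M (qball d (space M) x r))"
      using iter[OF x r] by (intro mult_left_mono) auto
    also have "\<dots> \<le> ennreal K0 * (ennreal (C^N) * emeasure M Q)"
      using B0 QM by (intro mult_left_mono emeasure_mono) auto
    also have "\<dots> = ennreal (max 0 K0 * C^N) * emeasure M Q"
      using C1 by (simp add: ennreal_mult mult.assoc max_def ennreal_neg)
    finally show "var_norm M p (\<lambda>y. w y * indicator Q y)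
           * var_norm M (conj_exp p) (\<lambda>y. inverse (w y) * indicator Q y)
           \<le> ennreal (max 0 K0 * C^N) * emeasure M Q" .
  qed
qed

end
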